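(* Let $w$ satisfy Assumption A, $\rho\in\mathcal P(I)$, $r>0$, and let $\gamma\in\Pi(\rho)$ be an optimal plan for $F_{\rm OT}(\rho)$. Suppose $\kappa(\rho;r)<\frac1n$. If $\beta,h>0$ satisfy $h>2(n-1)M(\beta/2),\qquad m(\beta)>\frac{F_{\rm OT}(\rho)}{1-n\kappa(\rho;r)},\qquad \beta/2\le r,$ then $\gamma(D^h_w)=0$.
   Context: $I=[0,2\pi]$, $I_n=I^n$, $|t|_{\mathbb T}=\min\{|t-k|:k\in2\pi\mathbb Z\}$. Assumption A: $w:I\times I\to[0,+\infty]$ symmetric, continuous (topology of $[0,+\infty]$), with $\{w=\infty\}=\{(x,y):|x-y|_{\mathbb T}=0\}$. $c_n(x)=\sum_{i\ne j}w(x_i,x_j)$; $\Pi(\rho)$ = probability measures on $I_n$ with all marginals $\rho$; $F_{\rm OT}(\rho)=\min_{\Pi(\rho)}\int c_n\,d\gamma$. For $t\in(0,\pi]$: $m(t)=\inf\{w(x,y):|x-y|_{\mathbb T}\le t\}$, $M(t)=\sup\{w(x,y):|x-y|_{\mathbb T}\ge t\}$. Periodic concentration: $\kappa(\rho,r)=\sup_{x\in I}\rho(\{y:|x-y|_{\mathbb T}<r\})$. $D^h_w=\{x\in I_n:w(x_j,x_k)>h\text{ for some }j\ne k\}$. *)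

theory Defs
  imports "HOL-Probability.Probability"
begin

definition Iint :: "real set" where
  "Iint = {0..2*pi}"

definition MI :: "real measure" where
  "MI = restrict_space borel Iint"

definition tdist :: "real \<Rightarrow> real \<Rightarrow> real" where
  "tdist x y = (INF k::int. \<bar>x - y - 2 * pi * of_int k\<bar>)"

text \<open>Assumption A on w : I x I -> [0, +infinity] (values outside I x I irrelevant).\<close>
definition assumptionA :: "(real \<Rightarrow> real \<Rightarrow> ennreal) \<Rightarrow> bool" where
  "assumptionA w \<longleftrightarrow>
     (\<forall>x\<in>Iint. \<forall>y\<in>Iint. w x y = w y x) \<and>
     continuous_on (Iint \<times> Iint) (\<lambda>(x, y). w x y) \<and>
     {(x, y). x \<in> Iint \<and> y \<in> Iint \<and> w x y = \<infinity>} =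
       {(x, y). x \<in> Iint \<and> y \<in> Iint \<and> tdist x y = 0}"

definition cost :: "(real \<Rightarrow> real \<Rightarrow> ennreal) \<Rightarrow> nat \<Rightarrow> (nat \<Rightarrow> real) \<Rightarrow> ennreal" where
  "cost w n x = (\<Sum>i\<in>{..<n}. \<Sum>j\<in>{..<n} - {i}. w (x i) (x j))"

definition MIn :: "nat \<Rightarrow> (nat \<Rightarrow> real) measure" where
  "MIn n = PiM {..<n} (\<lambda>_. MI)"

definition probI :: "real measure \<Rightarrow> bool" where
  "probI \<rho> \<longleftrightarrow> sets \<rho> = sets MI \<and> prob_space \<rho>"

definition plans :: "nat \<Rightarrow> real measure \<Rightarrow> (nat \<Rightarrow> real) measure set" where
  "plans n \<rho> = {\<gamma>. sets \<gamma> = sets (MIn n) \<and> prob_space \<gamma> \<and>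
                    (\<forall>i<n. distr \<gamma> MI (\<lambda>x. x i) = \<rho>)}"

definition F_OT :: "(real \<Rightarrow> real \<Rightarrow> ennreal) \<Rightarrow> nat \<Rightarrow> real measure \<Rightarrow> ennreal" where
  "F_OT w n \<rho> = (INF \<gamma>\<in>plans n \<rho>. \<integral>\<^sup>+ x. cost w n x \<partial>\<gamma>)"

definition m_w :: "(real \<Rightarrow> real \<Rightarrow> ennreal) \<Rightarrow> real \<Rightarrow> ennreal" where
  "m_w w t = (INF p\<in>{(x, y). x \<in> Iint \<and> y \<in> Iint \<and> tdist x y \<le> t}. w (fst p) (snd p))"

definition M_w :: "(real \<Rightarrow> real \<Rightarrow> ennreal) \<Rightarrow> real \<Rightarrow> ennreal" where
  "M_w w t = (SUP p\<in>{(x, y). x \<in> Iint \<and> y \<in> Iint \<and> tdist x y \<ge> t}. w (fst p) (snd p))"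

definition kappa :: "real measure \<Rightarrow> real \<Rightarrow> real" where
  "kappa \<rho> r = (SUP x\<in>Iint. measure \<rho> {y\<in>Iint. tdist x y < r})"

definition Dset :: "(real \<Rightarrow> real \<Rightarrow> ennreal) \<Rightarrow> nat \<Rightarrow> real \<Rightarrow> (nat \<Rightarrow> real) set" where
  "Dset w n h = {x \<in> space (MIn n). \<exists>j<n. \<exists>k<n. j \<noteq> k \<and> w (x j) (x k) > ennreal h}"

end

theory Submission
  imports Defs
begin

lemma tdist_le: "tdist x y \<le> \<bar>x - y - 2 * pi * of_int k\<bar>"
  unfolding tdist_def by (rule cINF_lower) (auto intro: bdd_belowI[where m=0])

lemma tdist_ge: "(\<And>k::int. c \<le> \<bar>x - y - 2 * pi * of_int k\<bar>) \<Longrightarrow> c \<le> tdist x y"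
  unfolding tdist_def by (rule cINF_greatest) auto

lemma tdist_nonneg: "0 \<le> tdist x y"
  by (rule tdist_ge) auto

lemma tdist_le_abs: "tdist x y \<le> \<bar>x - y\<bar>"
  using tdist_le[of x y 0] by simp

lemma tdist_sym: "tdist y x = tdist x y"
proof -
  have *: "tdist b a \<le> tdist a b" for a b
  proof (rule tdist_ge)
    fix k :: int
    have "tdist b a \<le> \<bar>b - a - 2 * pi * of_int (-k)\<bar>" by (rule tdist_le)
    also have "\<dots> = \<bar>a - b - 2 * pi * of_int k\<bar>" by simp
    finally show "tdist b a \<le> \<bar>a - b - 2 * pi * of_int k\<bar>" .
  qed
  show ?thesis using *[of x y] *[of y x] by simp
qed

lemma tdist_triangle: "tdist x z \<le> tdist x y + tdist y z"
proof -
  have "tdist x z - tdist y z \<le> tdist x y"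
  proof (rule tdist_ge)
    fix k1 :: int
    have "tdist x z - \<bar>x - y - 2 * pi * of_int k1\<bar> \<le> tdist y z"
    proof (rule tdist_ge)
      fix k2 :: int
      have "tdist x z \<le> \<bar>x - z - 2 * pi * of_int (k1 + k2)\<bar>" by (rule tdist_le)
      also have "\<dots> \<le> \<bar>x - y - 2 * pi * of_int k1\<bar> + \<bar>y - z - 2 * pi * of_int k2\<bar>"
        by (simp add: algebra_simps)
      finally show "tdist x z - \<bar>x - y - 2 * pi * of_int k1\<bar> \<le> \<bar>y - z - 2 * pi * of_int k2\<bar>" by simp
    qed
    then show "tdist x z - tdist y z \<le> \<bar>x - y - 2 * pi * of_int k1\<bar>" by simp
  qed
  then show ?thesis by simp
qed

lemma tdist_lip: "\<bar>tdist a b - tdist a' b'\<bar> \<le> \<bar>a - a'\<bar> + \<bar>b - b'\<bar>"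
proof -
  have "tdist a b \<le> tdist a a' + tdist a' b' + tdist b' b"
    using tdist_triangle[where x=a and y=a' and z=b] tdist_triangle[where x=a' and y=b' and z=b] by simp
  moreover have "tdist a' b' \<le> tdist a' a + tdist a b + tdist b b'"
    using tdist_triangle[where x=a' and y=a and z=b'] tdist_triangle[where x=a and y=b and z=b'] by simp
  ultimately show ?thesis
    using tdist_le_abs[of a a'] tdist_le_abs[of b' b] tdist_le_abs[of a' a] tdist_le_abs[of b b']
    by (simp add: abs_minus_commute)
qed

lemma continuous_tdist: "continuous_on UNIV (\<lambda>p. tdist (fst p) (snd p))"
proof (rule lipschitz_on_continuous_on)
  show "2-lipschitz_on UNIV (\<lambda>p. tdist (fst p) (snd p))"
  proof (rule lipschitz_onI)
    fix p q :: "real \<times> real"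
    have "\<bar>tdist (fst p) (snd p) - tdist (fst q) (snd q)\<bar> \<le> \<bar>fst p - fst q\<bar> + \<bar>snd p - snd q\<bar>"
      by (rule tdist_lip)
    also have "\<dots> \<le> dist p q + dist p q"
      using dist_fst_le[of p q] dist_snd_le[of p q] by (simp add: dist_real_def)
    finally show "dist (tdist (fst p) (snd p)) (tdist (fst q) (snd q)) \<le> 2 * dist p q"
      by (simp add: dist_real_def)
  qed simp
qed

lemma borel_tdist[measurable]: "(\<lambda>p. tdist (fst p) (snd p)) \<in> borel_measurable borel"
  using continuous_tdist by (intro borel_measurable_continuous_onI) simp

lemma measurable_tdist[measurable (raw)]:
  assumes [measurable]: "f \<in> borel_measurable M" "g \<in> borel_measurable M"
  shows "(\<lambda>x. tdist (f x) (g x)) \<in> borel_measurable M"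
proof -
  have "(\<lambda>x. (f x, g x)) \<in> measurable M borel"
    unfolding borel_prod[symmetric] by measurable
  from measurable_compose[OF this borel_tdist] show ?thesis by simp
qed

lemma space_MI: "space MI = Iint"
  by (simp add: MI_def space_restrict_space)

lemma sets_MI_sub: "A \<in> sets MI \<Longrightarrow> A \<subseteq> Iint"
  using sets.sets_into_space space_MI by blast

lemma space_MIn: "space (MIn n) = PiE {..<n} (\<lambda>_. Iint)"
  by (simp add: MIn_def space_PiM space_MI)

lemma MI_borel: "A \<in> sets borel \<Longrightarrow> A \<inter> Iint \<in> sets MI"
  unfolding MI_def by (auto simp: sets_restrict_space Int_commute)

lemma comp_MI: "i < n \<Longrightarrow> (\<lambda>x. x i) \<in> measurable (MIn n) MI"
  unfolding MIn_def by (rule measurable_component_singleton) simp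

lemma MI_to_borel: "(\<lambda>x. x) \<in> measurable MI borel"
  unfolding MI_def by (rule measurable_restrict_space1) simp

lemma comp_borel: "i < n \<Longrightarrow> (\<lambda>x. x i) \<in> borel_measurable (MIn n)"
  using measurable_compose[OF comp_MI MI_to_borel] by simp

lemma contA: "assumptionA w \<Longrightarrow> continuous_on (Iint \<times> Iint) (\<lambda>(x, y). w x y)"
  by (simp add: assumptionA_def)

lemma meas_w:
  assumes "assumptionA w" "f \<in> borel_measurable M" "g \<in> borel_measurable M"
    "\<And>x. x \<in> space M \<Longrightarrow> f x \<in> Iint \<and> g x \<in> Iint"
  shows "(\<lambda>x. w (f x) (g x)) \<in> borel_measurable M"
proof -
  have 1: "(\<lambda>(x, y). w x y) \<in> borel_measurable (restrict_space borel (Iint \<times> Iint))"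
    by (rule borel_measurable_continuous_on_restrict[OF contA[OF assms(1)]])
  have "(\<lambda>x. (f x, g x)) \<in> measurable M borel"
    unfolding borel_prod[symmetric] using assms(2,3) by measurable
  then have 2: "(\<lambda>x. (f x, g x)) \<in> measurable M (restrict_space borel (Iint \<times> Iint))"
    using assms(4) by (auto simp: measurable_restrict_space2_iff)
  from measurable_compose[OF 2 1] show ?thesis by simp
qed

lemma meas_w_comp:
  assumes "assumptionA w" "i < n" "l < n"
  shows "(\<lambda>x. w (x i) (x l)) \<in> borel_measurable (MIn n)"
  by (rule meas_w[OF assms(1) comp_borel[OF assms(2)] comp_borel[OF assms(3)]])
     (use assms in \<open>auto simp: space_MIn\<close>)

lemma meas_cost:
  assumes "assumptionA w"
  shows "cost w n \<in> borel_measurable (MIn n)"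
proof -
  have "(\<lambda>x. \<Sum>i\<in>{..<n}. \<Sum>l\<in>{..<n} - {i}. w (x i) (x l)) \<in> borel_measurable (MIn n)"
    by (intro borel_measurable_sum meas_w_comp[OF assms]) auto
  then show ?thesis unfolding cost_def[abs_def] .
qed

lemma Dset_meas:
  assumes "assumptionA w"
  shows "Dset w n h \<in> sets (MIn n)"
proof -
  have "Dset w n h = (\<Union>j\<in>{..<n}. \<Union>k\<in>{..<n}. {x \<in> space (MIn n). j \<noteq> k \<and> ennreal h < w (x j) (x k)})"
    unfolding Dset_def by auto
  also have "\<dots> \<in> sets (MIn n)"
  proof (intro sets.finite_UN finite_lessThan ballI)
    fix j k assume "j \<in> {..<n}" "k \<in> {..<n}"
    then have [measurable]: "(\<lambda>x. w (x j) (x k)) \<in> borel_measurable (MIn n)"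
      using meas_w_comp[OF assms] by auto
    show "{x \<in> space (MIn n). j \<noteq> k \<and> ennreal h < w (x j) (x k)} \<in> sets (MIn n)"
      by measurable
  qed
  finally show ?thesis .
qed

definition Rj :: "(real \<Rightarrow> real \<Rightarrow> ennreal) \<Rightarrow> nat \<Rightarrow> nat \<Rightarrow> (nat \<Rightarrow> real) \<Rightarrow> ennreal" where
  "Rj w n j u = (\<Sum>i\<in>{..<n}-{j}. \<Sum>l\<in>{..<n}-{i}-{j}. w (u i) (u l))"

definition Sj :: "(real \<Rightarrow> real \<Rightarrow> ennreal) \<Rightarrow> nat \<Rightarrow> nat \<Rightarrow> (nat \<Rightarrow> real) \<Rightarrow> ennreal" where
  "Sj w n j u = (\<Sum>l\<in>{..<n}-{j}. w (u j) (u l)) + (\<Sum>i\<in>{..<n}-{j}. w (u i) (u j))"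

lemma cost_decomp:
  assumes "j < n"
  shows "cost w n u = Sj w n j u + Rj w n j u"
proof -
  have "cost w n u = (\<Sum>l\<in>{..<n}-{j}. w (u j) (u l)) + (\<Sum>i\<in>{..<n}-{j}. \<Sum>l\<in>{..<n}-{i}. w (u i) (u l))"
    unfolding cost_def using assms by (subst sum.remove[of _ j]) auto
  also have "(\<Sum>i\<in>{..<n}-{j}. \<Sum>l\<in>{..<n}-{i}. w (u i) (u l))
      = (\<Sum>i\<in>{..<n}-{j}. w (u i) (u j) + (\<Sum>l\<in>{..<n}-{i}-{j}. w (u i) (u l)))"
  proof (rule sum.cong)
    fix i assume "i \<in> {..<n} - {j}"
    then show "(\<Sum>l\<in>{..<n}-{i}. w (u i) (u l)) = w (u i) (u j) + (\<Sum>l\<in>{..<n}-{i}-{j}. w (u i) (u l))"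
      using assms by (subst sum.remove[of _ j]) (auto simp: Diff_insert2[symmetric] insert_commute)
  qed simp
  finally show ?thesis
    unfolding Sj_def Rj_def by (simp add: sum.distrib add.assoc)
qed

lemma Rj_upd: "Rj w n j (u(j := v)) = Rj w n j u"
  unfolding Rj_def by (intro sum.cong refl) auto

lemma cost_perm:
  assumes "bij_betw p {..<n} {..<n}"
  shows "cost w n (u \<circ> p) = cost w n u"
proof -
  have inj: "inj_on p {..<n}" using assms by (rule bij_betw_imp_inj_on)
  have img: "p ` {..<n} = {..<n}" using assms by (rule bij_betw_imp_surj_on)
  have inner: "(\<Sum>l\<in>{..<n}-{i}. w (u (p i)) (u (p l))) = (\<Sum>l\<in>{..<n}-{p i}. w (u (p i)) (u l))"
    if "i < n" for i
  proof -
    have "p ` ({..<n} - {i}) = {..<n} - {p i}"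
      using inj img that by (auto simp: inj_on_image_set_diff)
    then show ?thesis
      using sum.reindex[of p "{..<n}-{i}" "\<lambda>l. w (u (p i)) (u l)"] inj
      by (simp add: inj_on_subset[OF inj] comp_def)
  qed
  have "cost w n (u \<circ> p) = (\<Sum>i\<in>{..<n}. \<Sum>l\<in>{..<n}-{p i}. w (u (p i)) (u l))"
    unfolding cost_def comp_def by (rule sum.cong[OF refl]) (simp add: inner)
  also have "\<dots> = (\<Sum>i\<in>p ` {..<n}. \<Sum>l\<in>{..<n}-{i}. w (u i) (u l))"
    using sum.reindex[OF inj, of "\<lambda>i. \<Sum>l\<in>{..<n}-{i}. w (u i) (u l)"] by simp
  also have "\<dots> = cost w n u" unfolding cost_def img ..
  finally show ?thesis .
qed

lemma swap_ineq:
  fixes x z :: "nat \<Rightarrow> real" and Mv :: ennreal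
  assumes jk: "j < n" "k < n" "j \<noteq> k"
    and sym: "w (x k) (x j) = w (x j) (x k)"
    and hk: "ennreal h < w (x j) (x k)"
    and hM: "2 * of_nat (n - 1) * Mv < ennreal h"
    and bnd: "\<And>l. l \<in> {..<n} - {j} \<Longrightarrow> w (z j) (x l) \<le> Mv \<and> w (x l) (z j) \<le> Mv \<and> w (x j) (z l) \<le> Mv \<and> w (z l) (x j) \<le> Mv"
    and fin: "cost w n x \<noteq> \<infinity>" "cost w n z \<noteq> \<infinity>"
  shows "cost w n (x(j := z j)) + cost w n (z(j := x j)) < cost w n x + cost w n z"
proof -
  let ?L = "{..<n} - {j}"
  have cardL: "card ?L = n - 1" using jk by simp
  have S1: "Sj w n j (x(j := z j)) \<le> 2 * of_nat (n - 1) * Mv"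
  proof -
    have "Sj w n j (x(j := z j)) = (\<Sum>l\<in>?L. w (z j) (x l)) + (\<Sum>i\<in>?L. w (x i) (z j))"
      unfolding Sj_def by (intro arg_cong2[where f="(+)"] sum.cong) auto
    also have "\<dots> \<le> of_nat (n - 1) * Mv + of_nat (n - 1) * Mv"
      by (intro add_mono; subst cardL[symmetric]; rule sum_bounded_above) (use bnd in auto)
    also have "\<dots> = 2 * of_nat (n - 1) * Mv" by (simp add: algebra_simps mult_2)
    finally show ?thesis .
  qed
  have S2: "Sj w n j (z(j := x j)) \<le> 2 * of_nat (n - 1) * Mv"
  proof -
    have "Sj w n j (z(j := x j)) = (\<Sum>l\<in>?L. w (x j) (z l)) + (\<Sum>i\<in>?L. w (z i) (x j))"
      unfolding Sj_def by (intro arg_cong2[where f="(+)"] sum.cong) auto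
    also have "\<dots> \<le> of_nat (n - 1) * Mv + of_nat (n - 1) * Mv"
      by (intro add_mono; subst cardL[symmetric]; rule sum_bounded_above) (use bnd in auto)
    also have "\<dots> = 2 * of_nat (n - 1) * Mv" by (simp add: algebra_simps mult_2)
    finally show ?thesis .
  qed
  have Sx: "w (x j) (x k) + w (x j) (x k) \<le> Sj w n j x"
  proof -
    have "w (x j) (x k) \<le> (\<Sum>l\<in>?L. w (x j) (x l))"
      by (rule member_le_sum) (use jk in auto)
    moreover have "w (x j) (x k) \<le> (\<Sum>i\<in>?L. w (x i) (x j))"
      using sym by (subst sym[symmetric]) (rule member_le_sum, use jk in auto)
    ultimately show ?thesis unfolding Sj_def by (rule add_mono)
  qed
  have "Sj w n j (x(j := z j)) + Sj w n j (z(j := x j)) \<le> 2 * of_nat (n - 1) * Mv + 2 * of_nat (n - 1) * Mv"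
    using S1 S2 by (rule add_mono)
  also have "\<dots> < ennreal h + ennreal h"
    using hM by (intro add_strict_mono) auto
  also have "\<dots> \<le> w (x j) (x k) + w (x j) (x k)"
    using hk by (intro add_mono) auto
  also have "\<dots> \<le> Sj w n j x + Sj w n j z"
    using Sx by (simp add: add_increasing2)
  finally have lt: "Sj w n j (x(j := z j)) + Sj w n j (z(j := x j)) < Sj w n j x + Sj w n j z" .
  have Rfin: "Rj w n j x + Rj w n j z \<noteq> \<infinity>"
    using fin cost_decomp[OF jk(1), of w x] cost_decomp[OF jk(1), of w z] by (auto simp: top_unique)
  have "cost w n (x(j := z j)) + cost w n (z(j := x j))
      = (Rj w n j x + Rj w n j z) + (Sj w n j (x(j := z j)) + Sj w n j (z(j := x j)))"
    using cost_decomp[OF jk(1)] Rj_upd by (simp add: algebra_simps)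
  also have "\<dots> < (Rj w n j x + Rj w n j z) + (Sj w n j x + Sj w n j z)"
    using Rfin lt by (simp add: ennreal_add_left_cancel_less)
  also have "\<dots> = cost w n x + cost w n z"
    using cost_decomp[OF jk(1)] by (simp add: algebra_simps)
  finally show ?thesis .
qed

definition tsw :: "nat \<Rightarrow> nat \<Rightarrow> nat \<Rightarrow> nat" where
  "tsw j m i = (if i = j then m else if i = m then j else i)"

definition zf :: "nat \<Rightarrow> nat \<Rightarrow> (nat \<Rightarrow> real) \<Rightarrow> nat \<Rightarrow> (nat \<Rightarrow> real)" where
  "zf n j y m = (if m < n then (\<lambda>i. y (tsw j m i)) else y)"

definition Om0 :: "nat \<Rightarrow> ((nat \<Rightarrow> real) \<times> (nat \<Rightarrow> real) \<times> nat) measure" where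
  "Om0 n = MIn n \<Otimes>\<^sub>M (MIn n \<Otimes>\<^sub>M count_space UNIV)"

lemma tsw_lt: "j < n \<Longrightarrow> m < n \<Longrightarrow> i < n \<Longrightarrow> tsw j m i < n"
  by (simp add: tsw_def)

lemma tsw_bij: "j < n \<Longrightarrow> m < n \<Longrightarrow> bij_betw (tsw j m) {..<n} {..<n}"
  unfolding bij_betw_def inj_on_def tsw_def
  by (auto simp: image_def split: if_splits)

lemma zf_space: "j < n \<Longrightarrow> y \<in> space (MIn n) \<Longrightarrow> zf n j y m \<in> space (MIn n)"
  unfolding zf_def space_MIn by (auto simp: PiE_def Pi_def extensional_def tsw_def)

lemma zf_j: "m < n \<Longrightarrow> zf n j y m j = y m"
  by (simp add: zf_def tsw_def)

lemma zf_comp: "j < n \<Longrightarrow> i < n \<Longrightarrow> \<exists>i'<n. zf n j y m i = y i'"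
  unfolding zf_def using tsw_lt[of j n m i] by auto

lemma cost_zf: "j < n \<Longrightarrow> cost w n (zf n j y m) = cost w n y"
proof (cases "m < n")
  case True
  assume "j < n"
  then have "cost w n (y \<circ> tsw j m) = cost w n y" using True by (intro cost_perm tsw_bij)
  then show ?thesis using True by (simp add: zf_def comp_def)
qed (simp add: zf_def)

lemma meas_MIn_single:
  assumes "\<And>i. i < n \<Longrightarrow> f i \<in> measurable N MI"
    and "\<And>\<omega>. \<omega> \<in> space N \<Longrightarrow> (\<lambda>i. f i \<omega>) \<in> space (MIn n)"
  shows "(\<lambda>\<omega> i. f i \<omega>) \<in> measurable N (MIn n)"
  unfolding MIn_def
  by (rule measurable_PiM_single') (use assms in \<open>auto simp: space_MIn space_MI MIn_def[symmetric]\<close>)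

lemma meas_zf: "j < n \<Longrightarrow> (\<lambda>(y, m). zf n j y m) \<in> measurable (MIn n \<Otimes>\<^sub>M count_space UNIV) (MIn n)"
proof -
  assume j: "j < n"
  have "(\<lambda>p. zf n j (fst p) (snd p)) \<in> measurable (MIn n \<Otimes>\<^sub>M count_space UNIV) (MIn n)"
  proof (rule measurable_compose_countable[where f="\<lambda>m p. zf n j (fst p) m"])
    fix m :: nat
    show "(\<lambda>p. zf n j (fst p) m) \<in> measurable (MIn n \<Otimes>\<^sub>M count_space UNIV) (MIn n)"
    proof (cases "m < n")
      case True
      have "(\<lambda>p i. fst p (tsw j m i)) \<in> measurable (MIn n \<Otimes>\<^sub>M count_space UNIV) (MIn n)"
      proof (rule meas_MIn_single)
        fix i assume "i < n"
        then have "tsw j m i < n" using j True tsw_lt by auto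
        then have "(\<lambda>y. y (tsw j m i)) \<in> measurable (MIn n) MI" by (rule comp_MI)
        then show "(\<lambda>p. fst p (tsw j m i)) \<in> measurable (MIn n \<Otimes>\<^sub>M count_space UNIV) MI"
          by measurable
      qed (use zf_space[OF j, of _ m] True in \<open>auto simp: space_pair_measure zf_def\<close>)
      then show ?thesis using True by (simp add: zf_def)
    qed (simp add: zf_def)
  qed simp
  then show ?thesis by (simp add: case_prod_beta')
qed

definition Um :: "nat \<Rightarrow> nat measure" where "Um n = measure_pmf (pmf_of_set {..<n})"
definition Ub :: "bool measure" where "Ub = measure_pmf (pmf_of_set UNIV)"

definition Om where "Om \<gamma> n = \<gamma> \<Otimes>\<^sub>M (\<gamma> \<Otimes>\<^sub>M Um n)"

definition Xp :: "nat \<Rightarrow> nat \<Rightarrow> ((nat \<Rightarrow> real) \<times> (nat \<Rightarrow> real) \<times> nat) set \<Rightarrow> _" where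
  "Xp n j E = (\<lambda>(x, y, m). if (x, y, m) \<in> E then x(j := zf n j y m j) else x)"
definition Yp :: "nat \<Rightarrow> nat \<Rightarrow> ((nat \<Rightarrow> real) \<times> (nat \<Rightarrow> real) \<times> nat) set \<Rightarrow> _" where
  "Yp n j E = (\<lambda>(x, y, m). if (x, y, m) \<in> E then (zf n j y m)(j := x j) else zf n j y m)"

definition Gam where
  "Gam \<gamma> n j E = distr (Om \<gamma> n \<Otimes>\<^sub>M Ub) (MIn n) (\<lambda>(\<omega>, b). if b then Xp n j E \<omega> else Yp n j E \<omega>)"

lemma meas_upd:
  assumes j: "j < n" and f: "f \<in> measurable N (MIn n)" and g: "g \<in> measurable N (MIn n)"
  shows "(\<lambda>\<omega>. (f \<omega>)(j := g \<omega> j)) \<in> measurable N (MIn n)"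
proof -
  have "(\<lambda>\<omega> i. (if i = j then g \<omega> j else f \<omega> i)) \<in> measurable N (MIn n)"
  proof (rule meas_MIn_single)
    fix i assume i: "i < n"
    show "(\<lambda>\<omega>. if i = j then g \<omega> j else f \<omega> i) \<in> measurable N MI"
      using measurable_compose[OF g comp_MI[OF j]] measurable_compose[OF f comp_MI[OF i]] by auto
  next
    fix \<omega> assume "\<omega> \<in> space N"
    then have "f \<omega> \<in> space (MIn n)" "g \<omega> \<in> space (MIn n)"
      using f g by (auto simp: measurable_def)
    then show "(\<lambda>i. if i = j then g \<omega> j else f \<omega> i) \<in> space (MIn n)"
      using j by (auto simp: space_MIn PiE_def Pi_def extensional_def)
  qed
  then show ?thesis by (simp add: fun_upd_def)
qed

context
  fixes n j :: nat and \<rho> :: "real measure" and \<gamma> :: "(nat \<Rightarrow> real) measure" and E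
  assumes j: "j < n" and \<rho>: "probI \<rho>" and \<gamma>: "\<gamma> \<in> plans n \<rho>" and E: "E \<in> sets (Om0 n)"
begin

lemma n_pos: "0 < n" using j by simp

lemma sets_\<gamma>: "sets \<gamma> = sets (MIn n)" using \<gamma> by (simp add: plans_def)
lemma prob_\<gamma>: "prob_space \<gamma>" using \<gamma> by (simp add: plans_def)
lemma marg_\<gamma>: "i < n \<Longrightarrow> distr \<gamma> MI (\<lambda>x. x i) = \<rho>" using \<gamma> by (simp add: plans_def)
lemma space_\<gamma>: "space \<gamma> = space (MIn n)" using sets_\<gamma> by (rule sets_eq_imp_space_eq)

lemma sets_Um: "sets (Um n) = sets (count_space UNIV)" by (simp add: Um_def)

lemma sets_Om: "sets (Om \<gamma> n) = sets (Om0 n)"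
  unfolding Om_def Om0_def using sets_\<gamma> sets_Um by (intro sets_pair_measure_cong) auto

lemma space_Om: "space (Om \<gamma> n) = space (Om0 n)" using sets_Om by (rule sets_eq_imp_space_eq)

lemma meas_Om: "measurable (Om \<gamma> n) N = measurable (Om0 n) N"
  using sets_Om by (rule measurable_cong_sets) simp

lemma meas_zf_Om: "(\<lambda>\<omega>. zf n j (fst (snd \<omega>)) (snd (snd \<omega>))) \<in> measurable (Om0 n) (MIn n)"
proof -
  have "(\<lambda>\<omega>. (\<lambda>p. zf n j (fst p) (snd p)) (snd \<omega>)) \<in> measurable (Om0 n) (MIn n)"
    unfolding Om0_def by (rule measurable_compose[OF measurable_snd]) (use meas_zf[OF j] in \<open>simp add: case_prod_beta'\<close>)
  then show ?thesis by simp
qed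

lemma meas_fst_Om: "(\<lambda>\<omega>. fst \<omega>) \<in> measurable (Om0 n) (MIn n)"
  unfolding Om0_def by simp

lemma Xp_eq: "Xp n j E = (\<lambda>\<omega>. if \<omega> \<in> E then (fst \<omega>)(j := zf n j (fst (snd \<omega>)) (snd (snd \<omega>)) j) else fst \<omega>)"
  by (auto simp: Xp_def fun_eq_iff split: prod.splits)

lemma Yp_eq: "Yp n j E = (\<lambda>\<omega>. if \<omega> \<in> E then (zf n j (fst (snd \<omega>)) (snd (snd \<omega>)))(j := fst \<omega> j) else zf n j (fst (snd \<omega>)) (snd (snd \<omega>)))"
  by (auto simp: Yp_def fun_eq_iff split: prod.splits)

lemma meas_Xp: "Xp n j E \<in> measurable (Om0 n) (MIn n)"
  unfolding Xp_eq
  by (intro measurable_If_set meas_upd[OF j] meas_zf_Om meas_fst_Om) (use E in auto)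

lemma meas_Yp: "Yp n j E \<in> measurable (Om0 n) (MIn n)"
  unfolding Yp_eq
  by (intro measurable_If_set meas_upd[OF j] meas_zf_Om meas_fst_Om) (use E in auto)

lemma meas_Xp': "Xp n j E \<in> measurable (Om \<gamma> n) (MIn n)"
  by (subst meas_Om) (rule meas_Xp)
lemma meas_Yp': "Yp n j E \<in> measurable (Om \<gamma> n) (MIn n)"
  by (subst meas_Om) (rule meas_Yp)

lemma prob_Um: "prob_space (Um n)" unfolding Um_def by (rule prob_space_measure_pmf)
lemma prob_Ub: "prob_space Ub" unfolding Ub_def by (rule prob_space_measure_pmf)

lemma prob_Om: "prob_space (Om \<gamma> n)"
  unfolding Om_def by (intro prob_space_pair prob_\<gamma> prob_Um)

lemma meas_Z: "(\<lambda>(\<omega>, b). if b then Xp n j E \<omega> else Yp n j E \<omega>) \<in> measurable (Om \<gamma> n \<Otimes>\<^sub>M Ub) (MIn n)"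
proof -
  note X = meas_Xp' and Y = meas_Yp'
  have "(\<lambda>p. if snd p then Xp n j E (fst p) else Yp n j E (fst p)) \<in> measurable (Om \<gamma> n \<Otimes>\<^sub>M Ub) (MIn n)"
  proof (rule measurable_If)
    show "(\<lambda>p. Xp n j E (fst p)) \<in> measurable (Om \<gamma> n \<Otimes>\<^sub>M Ub) (MIn n)"
      using X by measurable
    show "(\<lambda>p. Yp n j E (fst p)) \<in> measurable (Om \<gamma> n \<Otimes>\<^sub>M Ub) (MIn n)"
      using Y by measurable
    have "{p \<in> space (Om \<gamma> n \<Otimes>\<^sub>M Ub). snd p} = space (Om \<gamma> n) \<times> {True}"
      by (auto simp: space_pair_measure Ub_def)
    also have "\<dots> \<in> sets (Om \<gamma> n \<Otimes>\<^sub>M Ub)" by (intro pair_measureI) (auto simp: Ub_def)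
    finally show "{p \<in> space (Om \<gamma> n \<Otimes>\<^sub>M Ub). snd p} \<in> sets (Om \<gamma> n \<Otimes>\<^sub>M Ub)" .
  qed
  then show ?thesis by (simp add: case_prod_beta')
qed

lemma Gam_plan_sets: "sets (Gam \<gamma> n j E) = sets (MIn n)"
  by (simp add: Gam_def)

lemma Gam_prob: "prob_space (Gam \<gamma> n j E)"
  unfolding Gam_def by (intro prob_space.prob_space_distr prob_space_pair prob_Om prob_Ub meas_Z)

end

context
  fixes n j :: nat and \<rho> :: "real measure" and \<gamma> :: "(nat \<Rightarrow> real) measure" and E
  assumes j: "j < n" and \<rho>: "probI \<rho>" and \<gamma>: "\<gamma> \<in> plans n \<rho>" and E: "E \<in> sets (Om0 n)"
begin

lemma Gam_int:
  assumes \<phi>: "\<phi> \<in> borel_measurable (MIn n)"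
  shows "integral\<^sup>N (Gam \<gamma> n j E) \<phi> = (\<integral>\<^sup>+\<omega>. \<phi> (Xp n j E \<omega>) + \<phi> (Yp n j E \<omega>) \<partial>Om \<gamma> n) / 2"
proof -
  interpret B: prob_space Ub by (rule prob_Ub[OF j \<rho> \<gamma> E])
  note Z = meas_Z[OF j \<rho> \<gamma> E]
  have \<phi>': "\<phi> \<in> borel_measurable (distr (Om \<gamma> n \<Otimes>\<^sub>M Ub) (MIn n) (\<lambda>(\<omega>, b). if b then Xp n j E \<omega> else Yp n j E \<omega>))"
    using \<phi> by simp
  have "integral\<^sup>N (Gam \<gamma> n j E) \<phi> = (\<integral>\<^sup>+p. \<phi> ((\<lambda>(\<omega>, b). if b then Xp n j E \<omega> else Yp n j E \<omega>) p) \<partial>(Om \<gamma> n \<Otimes>\<^sub>M Ub))"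
    unfolding Gam_def by (rule nn_integral_distr[OF Z \<phi>'])
  also have "\<dots> = (\<integral>\<^sup>+\<omega>. \<integral>\<^sup>+b. \<phi> (if b then Xp n j E \<omega> else Yp n j E \<omega>) \<partial>Ub \<partial>Om \<gamma> n)"
  proof -
    have m: "(\<lambda>p. \<phi> (if snd p then Xp n j E (fst p) else Yp n j E (fst p))) \<in> borel_measurable (Om \<gamma> n \<Otimes>\<^sub>M Ub)"
      using measurable_compose[OF Z \<phi>] by (simp add: case_prod_beta')
    show ?thesis using B.nn_integral_fst[OF m] by (simp add: case_prod_beta' cong: if_cong)
  qed
  also have "\<dots> = (\<integral>\<^sup>+\<omega>. (\<phi> (Xp n j E \<omega>) + \<phi> (Yp n j E \<omega>)) / 2 \<partial>Om \<gamma> n)"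
  proof (rule nn_integral_cong)
    fix \<omega>
    have "(\<integral>\<^sup>+b. \<phi> (if b then Xp n j E \<omega> else Yp n j E \<omega>) \<partial>Ub)
        = (\<Sum>b\<in>UNIV. \<phi> (if b then Xp n j E \<omega> else Yp n j E \<omega>)) / of_nat (card (UNIV :: bool set))"
      unfolding Ub_def by (rule nn_integral_pmf_of_set) auto
    also have "\<dots> = (\<phi> (Xp n j E \<omega>) + \<phi> (Yp n j E \<omega>)) / 2"
      by (simp add: UNIV_bool add.commute)
    finally show "(\<integral>\<^sup>+b. \<phi> (if b then Xp n j E \<omega> else Yp n j E \<omega>) \<partial>Ub) = (\<phi> (Xp n j E \<omega>) + \<phi> (Yp n j E \<omega>)) / 2" .
  qed
  also have "\<dots> = (\<integral>\<^sup>+\<omega>. \<phi> (Xp n j E \<omega>) + \<phi> (Yp n j E \<omega>) \<partial>Om \<gamma> n) / 2"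
    using measurable_compose[OF meas_Xp'[OF j \<rho> \<gamma> E] \<phi>] measurable_compose[OF meas_Yp'[OF j \<rho> \<gamma> E] \<phi>]
    by (intro nn_integral_divide) auto
  finally show ?thesis .
qed

lemma int_fst:
  assumes \<phi>: "\<phi> \<in> borel_measurable (MIn n)"
  shows "(\<integral>\<^sup>+\<omega>. \<phi> (fst \<omega>) \<partial>Om \<gamma> n) = integral\<^sup>N \<gamma> \<phi>"
proof -
  interpret P: prob_space "\<gamma> \<Otimes>\<^sub>M Um n" by (intro prob_space_pair prob_\<gamma>[OF j \<rho> \<gamma> E] prob_Um[OF j \<rho> \<gamma> E])
  have \<phi>': "\<phi> \<in> borel_measurable \<gamma>" using \<phi> sets_\<gamma>[OF j \<rho> \<gamma> E] by (simp cong: measurable_cong_sets)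
  have "(\<integral>\<^sup>+\<omega>. \<phi> (fst \<omega>) \<partial>Om \<gamma> n) = (\<integral>\<^sup>+x. \<integral>\<^sup>+p. \<phi> x \<partial>(\<gamma> \<Otimes>\<^sub>M Um n) \<partial>\<gamma>)"
    unfolding Om_def by (subst P.nn_integral_fst[symmetric]) (use \<phi>' in auto)
  also have "\<dots> = integral\<^sup>N \<gamma> \<phi>" by (simp add: P.emeasure_space_1)
  finally show ?thesis .
qed

lemma int_snd:
  assumes \<phi>: "\<phi> \<in> borel_measurable (MIn n)"
  shows "(\<integral>\<^sup>+\<omega>. \<phi> (fst (snd \<omega>)) \<partial>Om \<gamma> n) = integral\<^sup>N \<gamma> \<phi>"
proof -
  interpret P: prob_space "\<gamma> \<Otimes>\<^sub>M Um n" by (intro prob_space_pair prob_\<gamma>[OF j \<rho> \<gamma> E] prob_Um[OF j \<rho> \<gamma> E])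
  interpret U: prob_space "Um n" by (rule prob_Um[OF j \<rho> \<gamma> E])
  interpret G: prob_space \<gamma> by (rule prob_\<gamma>[OF j \<rho> \<gamma> E])
  have \<phi>': "\<phi> \<in> borel_measurable \<gamma>" using \<phi> sets_\<gamma>[OF j \<rho> \<gamma> E] by (simp cong: measurable_cong_sets)
  have "(\<integral>\<^sup>+\<omega>. \<phi> (fst (snd \<omega>)) \<partial>Om \<gamma> n) = (\<integral>\<^sup>+x. \<integral>\<^sup>+p. \<phi> (fst p) \<partial>(\<gamma> \<Otimes>\<^sub>M Um n) \<partial>\<gamma>)"
    unfolding Om_def by (subst P.nn_integral_fst[symmetric]) (use \<phi>' in auto)
  also have "\<dots> = (\<integral>\<^sup>+p. \<phi> (fst p) \<partial>(\<gamma> \<Otimes>\<^sub>M Um n))" by (simp add: G.emeasure_space_1)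
  also have "\<dots> = (\<integral>\<^sup>+y. \<integral>\<^sup>+m. \<phi> y \<partial>Um n \<partial>\<gamma>)"
    by (subst U.nn_integral_fst[symmetric]) (use \<phi>' in auto)
  also have "\<dots> = integral\<^sup>N \<gamma> \<phi>" by (simp add: U.emeasure_space_1)
  finally show ?thesis .
qed

lemma marg_int:
  assumes i: "i < n" and S: "S \<in> sets MI"
  shows "(\<integral>\<^sup>+y. indicator S (y i) \<partial>\<gamma>) = emeasure \<rho> S"
proof -
  have T: "(\<lambda>y. y i) \<in> measurable \<gamma> MI"
    using comp_MI[OF i] sets_\<gamma>[OF j \<rho> \<gamma> E] by (simp cong: measurable_cong_sets)
  have "(\<integral>\<^sup>+y. indicator S (y i) \<partial>\<gamma>) = integral\<^sup>N (distr \<gamma> MI (\<lambda>y. y i)) (indicator S)"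
    using S by (intro nn_integral_distr[symmetric] T) auto
  also have "\<dots> = integral\<^sup>N \<rho> (indicator S)" using marg_\<gamma>[OF j \<rho> \<gamma> E i] by simp
  also have "\<dots> = emeasure \<rho> S"
    using S \<rho> by (intro nn_integral_indicator) (simp add: probI_def)
  finally show ?thesis .
qed

end

context
  fixes n j :: nat and \<rho> :: "real measure" and \<gamma> :: "(nat \<Rightarrow> real) measure" and E
  assumes j: "j < n" and \<rho>: "probI \<rho>" and \<gamma>: "\<gamma> \<in> plans n \<rho>" and E: "E \<in> sets (Om0 n)"
begin

lemma marg_zf:
  assumes i: "i < n" and S: "S \<in> sets MI"
  shows "(\<integral>\<^sup>+\<omega>. indicator S (zf n j (fst (snd \<omega>)) (snd (snd \<omega>)) i) \<partial>Om \<gamma> n) = emeasure \<rho> S"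
proof -
  interpret P: prob_space "\<gamma> \<Otimes>\<^sub>M Um n" by (intro prob_space_pair prob_\<gamma>[OF j \<rho> \<gamma> E] prob_Um[OF j \<rho> \<gamma> E])
  interpret U: prob_space "Um n" by (rule prob_Um[OF j \<rho> \<gamma> E])
  interpret G: prob_space \<gamma> by (rule prob_\<gamma>[OF j \<rho> \<gamma> E])
  interpret PS: pair_sigma_finite \<gamma> "Um n"
    by (intro pair_sigma_finite.intro G.sigma_finite_measure_axioms U.sigma_finite_measure_axioms)
  have sP: "sets (\<gamma> \<Otimes>\<^sub>M Um n) = sets (MIn n \<Otimes>\<^sub>M count_space UNIV)"
    using sets_\<gamma>[OF j \<rho> \<gamma> E] sets_Um[OF j \<rho> \<gamma> E] by (intro sets_pair_measure_cong) auto
  have f0: "(\<lambda>p. indicator S (zf n j (fst p) (snd p) i)) \<in> borel_measurable (MIn n \<Otimes>\<^sub>M count_space UNIV)"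
  proof -
    have "(\<lambda>p. zf n j (fst p) (snd p) i) \<in> measurable (MIn n \<Otimes>\<^sub>M count_space UNIV) MI"
      using measurable_compose[OF meas_zf[OF j] comp_MI[OF i]] by (simp add: case_prod_beta')
    then show ?thesis using S by measurable
  qed
  have f: "(\<lambda>p. indicator S (zf n j (fst p) (snd p) i)) \<in> borel_measurable (\<gamma> \<Otimes>\<^sub>M Um n)"
    using f0 sP by (simp cong: measurable_cong_sets)
  have inner: "(\<integral>\<^sup>+y. indicator S (zf n j y m i) \<partial>\<gamma>) = emeasure \<rho> S" for m
  proof -
    define i' where "i' = (if m < n then tsw j m i else i)"
    have i': "i' < n" using tsw_lt[OF j _ i] i by (auto simp: i'_def)
    have "(\<integral>\<^sup>+y. indicator S (zf n j y m i) \<partial>\<gamma>) = (\<integral>\<^sup>+y. indicator S (y i') \<partial>\<gamma>)"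
      by (simp add: zf_def i'_def)
    also have "\<dots> = emeasure \<rho> S" by (rule marg_int[OF j \<rho> \<gamma> E i' S])
    finally show ?thesis .
  qed
  have "(\<integral>\<^sup>+\<omega>. indicator S (zf n j (fst (snd \<omega>)) (snd (snd \<omega>)) i) \<partial>Om \<gamma> n)
      = (\<integral>\<^sup>+x. \<integral>\<^sup>+p. indicator S (zf n j (fst p) (snd p) i) \<partial>(\<gamma> \<Otimes>\<^sub>M Um n) \<partial>\<gamma>)"
  proof -
    have f2: "(\<lambda>\<omega>. indicator S (zf n j (fst (snd \<omega>)) (snd (snd \<omega>)) i)) \<in> borel_measurable (\<gamma> \<Otimes>\<^sub>M (\<gamma> \<Otimes>\<^sub>M Um n))"
      using measurable_compose[OF measurable_snd[of \<gamma> "\<gamma> \<Otimes>\<^sub>M Um n"] f] by simp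
    show ?thesis unfolding Om_def by (subst P.nn_integral_fst[symmetric]) (use f2 in auto)
  qed
  also have "\<dots> = (\<integral>\<^sup>+p. indicator S (zf n j (fst p) (snd p) i) \<partial>(\<gamma> \<Otimes>\<^sub>M Um n))"
    by (simp add: G.emeasure_space_1)
  also have "\<dots> = (\<integral>\<^sup>+m. \<integral>\<^sup>+y. indicator S (zf n j y m i) \<partial>\<gamma> \<partial>Um n)"
    using PS.nn_integral_snd[OF f] by simp
  also have "\<dots> = emeasure \<rho> S" by (simp add: inner U.emeasure_space_1)
  finally show ?thesis .
qed

lemma ind_swap:
  "indicator S (Xp n j E \<omega> i) + indicator S (Yp n j E \<omega> i)
   = (indicator S (fst \<omega> i) + indicator S (zf n j (fst (snd \<omega>)) (snd (snd \<omega>)) i) :: ennreal)"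
  unfolding Xp_eq[OF j \<rho> \<gamma> E] Yp_eq[OF j \<rho> \<gamma> E] by (auto simp: add.commute)

lemma Gam_plans: "Gam \<gamma> n j E \<in> plans n \<rho>"
proof -
  have "distr (Gam \<gamma> n j E) MI (\<lambda>x. x i) = \<rho>" if i: "i < n" for i
  proof (rule measure_eqI)
    show "sets (distr (Gam \<gamma> n j E) MI (\<lambda>x. x i)) = sets \<rho>" using \<rho> by (simp add: probI_def)
  next
    fix S assume "S \<in> sets (distr (Gam \<gamma> n j E) MI (\<lambda>x. x i))"
    then have S: "S \<in> sets MI" by simp
    have T: "(\<lambda>x. x i) \<in> measurable (Gam \<gamma> n j E) MI"
      using comp_MI[OF i] Gam_plan_sets[OF j \<rho> \<gamma> E] by (simp cong: measurable_cong_sets)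
    have \<phi>: "(\<lambda>v. indicator S (v i)) \<in> borel_measurable (MIn n)"
      using comp_MI[OF i] S by measurable
    have m1: "(\<lambda>\<omega>. indicator S (fst \<omega> i) :: ennreal) \<in> borel_measurable (Om \<gamma> n)"
      by (subst meas_Om[OF j \<rho> \<gamma> E]) (rule measurable_compose[OF meas_fst_Om[OF j \<rho> \<gamma> E] \<phi>])
    have m2: "(\<lambda>\<omega>. indicator S (zf n j (fst (snd \<omega>)) (snd (snd \<omega>)) i) :: ennreal) \<in> borel_measurable (Om \<gamma> n)"
      by (subst meas_Om[OF j \<rho> \<gamma> E]) (rule measurable_compose[OF meas_zf_Om[OF j \<rho> \<gamma> E] \<phi>])
    have "emeasure (distr (Gam \<gamma> n j E) MI (\<lambda>x. x i)) S = integral\<^sup>N (distr (Gam \<gamma> n j E) MI (\<lambda>x. x i)) (indicator S)"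
      using S by (simp add: nn_integral_indicator)
    also have "\<dots> = (\<integral>\<^sup>+v. indicator S (v i) \<partial>Gam \<gamma> n j E)"
      using S by (intro nn_integral_distr T) auto
    also have "\<dots> = (\<integral>\<^sup>+\<omega>. indicator S (Xp n j E \<omega> i) + indicator S (Yp n j E \<omega> i) \<partial>Om \<gamma> n) / 2"
      by (rule Gam_int[OF j \<rho> \<gamma> E \<phi>])
    also have "\<dots> = (\<integral>\<^sup>+\<omega>. indicator S (fst \<omega> i) + indicator S (zf n j (fst (snd \<omega>)) (snd (snd \<omega>)) i) \<partial>Om \<gamma> n) / 2"
      by (simp add: ind_swap)
    also have "\<dots> = ((\<integral>\<^sup>+\<omega>. indicator S (fst \<omega> i) \<partial>Om \<gamma> n) + (\<integral>\<^sup>+\<omega>. indicator S (zf n j (fst (snd \<omega>)) (snd (snd \<omega>)) i) \<partial>Om \<gamma> n)) / 2"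
      using m1 m2 by (simp add: nn_integral_add)
    also have "(\<integral>\<^sup>+\<omega>. indicator S (fst \<omega> i) \<partial>Om \<gamma> n) = emeasure \<rho> S"
      using int_fst[OF j \<rho> \<gamma> E \<phi>] marg_int[OF j \<rho> \<gamma> E i S] by simp
    also have "(\<integral>\<^sup>+\<omega>. indicator S (zf n j (fst (snd \<omega>)) (snd (snd \<omega>)) i) \<partial>Om \<gamma> n) = emeasure \<rho> S"
      by (rule marg_zf[OF i S])
    also have "(emeasure \<rho> S + emeasure \<rho> S) / 2 = emeasure \<rho> S"
      using mult_divide_eq_ennreal[of 2 "emeasure \<rho> S"] by (simp add: mult_2_right[symmetric])
    finally show "emeasure (distr (Gam \<gamma> n j E) MI (\<lambda>x. x i)) S = emeasure \<rho> S" .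
  qed
  then show ?thesis
    unfolding plans_def using Gam_plan_sets[OF j \<rho> \<gamma> E] Gam_prob[OF j \<rho> \<gamma> E] by auto
qed

end

lemma pigeon:
  fixes x y :: "nat \<Rightarrow> real"
  assumes j: "j < n" and sep: "\<And>a b. a < n \<Longrightarrow> b < n \<Longrightarrow> a \<noteq> b \<Longrightarrow> \<beta> < tdist (y a) (y b)"
  shows "\<exists>m<n. \<forall>l<n. l \<noteq> j \<longrightarrow> \<beta> / 2 \<le> tdist (y m) (x l)"
proof (rule ccontr)
  assume "\<not> ?thesis"
  then have "\<forall>m\<in>{..<n}. \<exists>l. l \<in> {..<n} - {j} \<and> tdist (y m) (x l) < \<beta> / 2" by (auto simp: not_le)
  then obtain f where f: "\<And>m. m \<in> {..<n} \<Longrightarrow> f m \<in> {..<n} - {j} \<and> tdist (y m) (x (f m)) < \<beta> / 2"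
    by metis
  have "card (f ` {..<n}) \<le> card ({..<n} - {j})"
    using f by (intro card_mono) auto
  also have "\<dots> < card {..<n}" using j by simp
  finally have "\<not> inj_on f {..<n}" by (intro pigeonhole) 
  then obtain a b where ab: "a < n" "b < n" "a \<noteq> b" "f a = f b"
    unfolding inj_on_def by auto
  have "tdist (y a) (y b) \<le> tdist (y a) (x (f a)) + tdist (x (f a)) (y b)"
    by (rule tdist_triangle)
  also have "\<dots> = tdist (y a) (x (f a)) + tdist (y b) (x (f b))"
    using ab by (simp add: tdist_sym)
  also have "\<dots> < \<beta>" using f[of a] f[of b] ab by simp
  finally show False using sep[OF ab(1-3)] by simp
qed

lemma pos_slice:
  assumes M: "sigma_finite_measure M" and N: "N \<in> sets (K \<Otimes>\<^sub>M M)" and A: "A \<in> sets K"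
    and KA: "emeasure K A \<noteq> 0" and slice: "\<And>x. x \<in> A \<Longrightarrow> emeasure M (Pair x -` N) \<noteq> 0"
  shows "emeasure (K \<Otimes>\<^sub>M M) N \<noteq> 0"
proof
  interpret M: sigma_finite_measure M by (rule M)
  assume "emeasure (K \<Otimes>\<^sub>M M) N = 0"
  then have "(\<integral>\<^sup>+x. emeasure M (Pair x -` N) \<partial>K) = 0"
    using M.emeasure_pair_measure_alt[OF N] by simp
  then have "AE x in K. emeasure M (Pair x -` N) = 0"
    using M.measurable_emeasure_Pair[OF N] by (simp add: nn_integral_0_iff_AE)
  then have "AE x in K. x \<notin> A" using slice by (auto elim!: AE_mp)
  then have "emeasure K A = 0"
    using A by (subst (asm) AE_iff_measurable[of A]) (auto dest: sets.sets_into_space)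
  with KA show False by simp
qed

locale LS =
  fixes w n \<rho> \<gamma> r \<beta> h j k
  assumes A: "assumptionA w" and \<rho>: "probI \<rho>" and r: "r > 0" and \<gamma>: "\<gamma> \<in> plans n \<rho>"
    and opt: "(\<integral>\<^sup>+ x. cost w n x \<partial>\<gamma>) = F_OT w n \<rho>"
    and kap: "kappa \<rho> r < 1 / real n"
    and \<beta>: "\<beta> > 0" and h: "h > 0"
    and hM: "ennreal h > 2 * of_nat (n - 1) * M_w w (\<beta> / 2)"
    and mb: "m_w w \<beta> > F_OT w n \<rho> / ennreal (1 - real n * kappa \<rho> r)"
    and \<beta>r: "\<beta> / 2 \<le> r"
    and jk: "j < n" "k < n" "j \<noteq> k"
    and Djk: "emeasure \<gamma> {x \<in> space (MIn n). ennreal h < w (x j) (x k)} \<noteq> 0"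

context LS
begin

lemma n_pos': "0 < n" using jk by simp

lemma Fin: "F_OT w n \<rho> \<noteq> \<infinity>"
  using mb by (metis ennreal_divide_eq_top_iff ennreal_neq_top infinity_ennreal_def neq_top_trans nless_le)

lemma sets\<gamma>: "sets \<gamma> = sets (MIn n)" using \<gamma> by (simp add: plans_def)
lemma space\<gamma>: "space \<gamma> = space (MIn n)" using sets\<gamma> by (rule sets_eq_imp_space_eq)
lemma prob\<gamma>: "prob_space \<gamma>" using \<gamma> by (simp add: plans_def)
lemma prob\<rho>: "prob_space \<rho>" using \<rho> by (simp add: probI_def)
lemma sets\<rho>: "sets \<rho> = sets MI" using \<rho> by (simp add: probI_def)

lemma cost\<gamma>: "cost w n \<in> borel_measurable \<gamma>"
  using meas_cost[OF A] sets\<gamma> by (simp cong: measurable_cong_sets)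

lemma ball_sets: "{t \<in> Iint. tdist x0 t < r} \<in> sets MI"
proof -
  have "(\<lambda>t. tdist x0 t) \<in> borel_measurable MI"
    using measurable_tdist[OF measurable_const[of x0] MI_to_borel] by simp
  then have "{t \<in> space MI. tdist x0 t < r} \<in> sets MI" by measurable
  then show ?thesis by (simp add: space_MI)
qed

lemma kappa_upper: "x0 \<in> Iint \<Longrightarrow> measure \<rho> {t \<in> Iint. tdist x0 t < r} \<le> kappa \<rho> r"
  unfolding kappa_def
proof (rule cSUP_upper)
  interpret R: prob_space \<rho> by (rule prob\<rho>)
  show "bdd_above ((\<lambda>x. measure \<rho> {y \<in> Iint. tdist x y < r}) ` Iint)"
    by (rule bdd_aboveI[where M=1]) auto
qed

lemma kappa_nonneg: "0 \<le> kappa \<rho> r"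
proof -
  have "0 \<in> Iint" by (simp add: Iint_def)
  then show ?thesis using kappa_upper[of 0] measure_nonneg[of \<rho>] by (meson order_trans)
qed

lemma q_pos: "0 < 1 - real n * kappa \<rho> r"
  using kap n_pos' by (simp add: field_simps)

lemma marg_set: "l < n \<Longrightarrow> B \<in> sets MI \<Longrightarrow> measure \<gamma> {y \<in> space \<gamma>. y l \<in> B} = measure \<rho> B"
proof -
  assume l: "l < n" and B: "B \<in> sets MI"
  have T: "(\<lambda>y. y l) \<in> measurable \<gamma> MI"
    using comp_MI[OF l] sets\<gamma> by (simp cong: measurable_cong_sets)
  have "measure \<rho> B = measure (distr \<gamma> MI (\<lambda>y. y l)) B" using \<gamma> l by (simp add: plans_def)
  also have "\<dots> = measure \<gamma> ((\<lambda>y. y l) -` B \<inter> space \<gamma>)" using B T by (simp add: measure_distr)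
  finally show ?thesis by (simp add: Int_def conj_commute vimage_def)
qed

definition Far where "Far x = {y \<in> space (MIn n). \<forall>l<n. r \<le> tdist (x j) (y l)}"

lemma Far_sets: "Far x \<in> sets (MIn n)"
proof -
  have "Far x = space (MIn n) \<inter> (\<Inter>l\<in>{..<n}. {y \<in> space (MIn n). r \<le> tdist (x j) (y l)})"
    unfolding Far_def using n_pos' by auto
  also have "\<dots> \<in> sets (MIn n)"
  proof (intro sets.Int sets.top sets.finite_INT finite_lessThan ballI)
    fix l assume "l \<in> {..<n}"
    then have "(\<lambda>y. tdist (x j) (y l)) \<in> borel_measurable (MIn n)"
      by (intro measurable_tdist measurable_const comp_borel) auto
    then show "{y \<in> space (MIn n). r \<le> tdist (x j) (y l)} \<in> sets (MIn n)" by measurable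
  qed (use n_pos' in auto)
  finally show ?thesis .
qed

lemma near_bound:
  assumes x: "x \<in> space (MIn n)"
  shows "measure \<gamma> (space \<gamma> - Far x) \<le> real n * kappa \<rho> r"
proof -
  interpret G: prob_space \<gamma> by (rule prob\<gamma>)
  have xj: "x j \<in> Iint" using x jk by (auto simp: space_MIn)
  have "space \<gamma> - Far x = (\<Union>l\<in>{..<n}. {y \<in> space \<gamma>. y l \<in> {t \<in> Iint. tdist (x j) t < r}})"
    unfolding Far_def space\<gamma> by (auto simp: space_MIn not_le)
  then have "measure \<gamma> (space \<gamma> - Far x) = measure \<gamma> (\<Union>l\<in>{..<n}. {y \<in> space \<gamma>. y l \<in> {t \<in> Iint. tdist (x j) t < r}})"
    by simp
  also have "\<dots> \<le> (\<Sum>l\<in>{..<n}. measure \<gamma> {y \<in> space \<gamma>. y l \<in> {t \<in> Iint. tdist (x j) t < r}})"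
  proof (rule G.finite_measure_subadditive_finite)
    show "(\<lambda>l. {y \<in> space \<gamma>. y l \<in> {t \<in> Iint. tdist (x j) t < r}}) ` {..<n} \<subseteq> sets \<gamma>"
    proof safe
      fix l assume l: "l < n"
      have "(\<lambda>y. y l) \<in> measurable \<gamma> MI"
        using comp_MI[OF l] sets\<gamma> by (simp cong: measurable_cong_sets)
      then show "{y \<in> space \<gamma>. y l \<in> {t \<in> Iint. tdist (x j) t < r}} \<in> sets \<gamma>"
        using ball_sets by measurable
    qed
  qed simp
  also have "\<dots> = (\<Sum>l\<in>{..<n}. measure \<rho> {t \<in> Iint. tdist (x j) t < r})"
    by (intro sum.cong refl marg_set ball_sets) auto
  also have "\<dots> \<le> (\<Sum>l\<in>{..<n}. kappa \<rho> r)"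
    by (intro sum_mono kappa_upper xj)
  also have "\<dots> = real n * kappa \<rho> r" by simp
  finally show ?thesis .
qed

end

context LS
begin

definition Dp where "Dp = {x \<in> space (MIn n). cost w n x \<noteq> \<infinity> \<and> ennreal h < w (x j) (x k)}"
definition Gp where "Gp = {y \<in> space (MIn n). cost w n y \<noteq> \<infinity> \<and> cost w n y < m_w w \<beta>}"

lemma wjk_meas: "(\<lambda>x. w (x j) (x k)) \<in> borel_measurable (MIn n)"
  using meas_w_comp[OF A jk(1,2)] .

lemma Dp_sets: "Dp \<in> sets (MIn n)"
  unfolding Dp_def using meas_cost[OF A] wjk_meas by measurable

lemma Gp_sets: "Gp \<in> sets (MIn n)"
  unfolding Gp_def using meas_cost[OF A] by measurable

lemma AE_fin: "AE x in \<gamma>. cost w n x \<noteq> \<infinity>"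
  using nn_integral_noteq_infinite[OF cost\<gamma>] opt Fin by simp

lemma Dp_pos: "emeasure \<gamma> Dp \<noteq> 0"
proof -
  have "emeasure \<gamma> Dp = emeasure \<gamma> {x \<in> space (MIn n). ennreal h < w (x j) (x k)}"
  proof (rule emeasure_eq_AE)
    show "AE x in \<gamma>. (x \<in> Dp) = (x \<in> {x \<in> space (MIn n). ennreal h < w (x j) (x k)})"
      using AE_fin by (auto simp: Dp_def elim!: AE_mp)
    show "Dp \<in> sets \<gamma>" using Dp_sets sets\<gamma> by simp
    show "{x \<in> space (MIn n). ennreal h < w (x j) (x k)} \<in> sets \<gamma>"
      using wjk_meas sets\<gamma> by simp
  qed
  then show ?thesis using Djk by simp
qed

lemma Gp_measure: "real n * kappa \<rho> r < measure \<gamma> Gp"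
proof -
  interpret G: prob_space \<gamma> by (rule prob\<gamma>)
  define Bad where "Bad = {y \<in> space \<gamma>. m_w w \<beta> \<le> cost w n y}"
  define q where "q = 1 - real n * kappa \<rho> r"
  have q: "0 < q" using q_pos by (simp add: q_def)
  have Bad_sets: "Bad \<in> sets \<gamma>" unfolding Bad_def using cost\<gamma> by measurable
  have "m_w w \<beta> * emeasure \<gamma> Bad = (\<integral>\<^sup>+y. m_w w \<beta> * indicator Bad y \<partial>\<gamma>)"
    using Bad_sets by (simp add: nn_integral_cmult_indicator)
  also have "\<dots> \<le> (\<integral>\<^sup>+y. cost w n y \<partial>\<gamma>)"
    by (intro nn_integral_mono) (auto simp: Bad_def indicator_def)
  also have "\<dots> = F_OT w n \<rho>" by (rule opt)
  finally have mk: "m_w w \<beta> * emeasure \<gamma> Bad \<le> F_OT w n \<rho>" .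
  have lt: "F_OT w n \<rho> < m_w w \<beta> * ennreal q"
    using mb q by (simp add: q_def divide_less_ennreal)
  have "emeasure \<gamma> Bad < ennreal q"
  proof (rule ccontr)
    assume "\<not> emeasure \<gamma> Bad < ennreal q"
    then have "m_w w \<beta> * ennreal q \<le> m_w w \<beta> * emeasure \<gamma> Bad"
      by (intro mult_left_mono) auto
    with mk lt show False by simp
  qed
  then have mB: "measure \<gamma> Bad < q"
    using q by (simp add: G.emeasure_eq_measure ennreal_less_iff)
  define Inf where "Inf = {y \<in> space \<gamma>. cost w n y = \<infinity>}"
  have Inf_sets: "Inf \<in> sets \<gamma>" unfolding Inf_def using cost\<gamma> by measurable
  have Inf0: "measure \<gamma> Inf = 0"
  proof -
    have "emeasure \<gamma> Inf = 0"
      using AE_fin Inf_sets by (subst (asm) AE_iff_measurable[of Inf]) (auto simp: Inf_def)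
    then show ?thesis by (simp add: G.emeasure_eq_measure)
  qed
  have sub: "space \<gamma> - Bad \<subseteq> Gp \<union> Inf"
    by (auto simp: Bad_def Gp_def Inf_def space\<gamma> not_le)
  have "1 - measure \<gamma> Bad = measure \<gamma> (space \<gamma> - Bad)"
    using Bad_sets by (simp add: G.prob_compl)
  also have "\<dots> \<le> measure \<gamma> (Gp \<union> Inf)"
    using sub Gp_sets sets\<gamma> Inf_sets by (intro G.finite_measure_mono) auto
  also have "\<dots> \<le> measure \<gamma> Gp + measure \<gamma> Inf"
    using Gp_sets sets\<gamma> Inf_sets by (intro measure_Un_le) auto
  finally show ?thesis using mB Inf0 by (simp add: q_def)
qed

lemma GF_pos:
  assumes x: "x \<in> space (MIn n)"
  shows "0 < measure \<gamma> (Gp \<inter> Far x)"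
proof -
  interpret G: prob_space \<gamma> by (rule prob\<gamma>)
  have "measure \<gamma> Gp \<le> measure \<gamma> ((Gp \<inter> Far x) \<union> (space \<gamma> - Far x))"
    using Gp_sets Far_sets sets\<gamma> by (intro G.finite_measure_mono) (auto simp: Gp_def space\<gamma>)
  also have "\<dots> \<le> measure \<gamma> (Gp \<inter> Far x) + measure \<gamma> (space \<gamma> - Far x)"
    using Gp_sets Far_sets sets\<gamma> by (intro measure_Un_le) auto
  finally show ?thesis using near_bound[OF x] Gp_measure by simp
qed

end

lemma comp_borel_all: "(\<lambda>x. x l) \<in> borel_measurable (MIn n)"
proof (cases "l < n")
  case True then show ?thesis by (rule comp_borel)
next
  case False
  have "(\<lambda>x. x l) \<in> borel_measurable (MIn n) \<longleftrightarrow> (\<lambda>x. undefined :: real) \<in> borel_measurable (MIn n)"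
    by (rule measurable_cong) (use False in \<open>auto simp: space_MIn PiE_def extensional_def\<close>)
  then show ?thesis by simp
qed

lemma term_le_cost: "a < n \<Longrightarrow> b < n \<Longrightarrow> a \<noteq> b \<Longrightarrow> w (y a) (y b) \<le> cost w n y"
proof -
  assume ab: "a < n" "b < n" "a \<noteq> b"
  have "w (y a) (y b) \<le> (\<Sum>l\<in>{..<n}-{a}. w (y a) (y l))"
    by (rule member_le_sum) (use ab in auto)
  also have "\<dots> \<le> cost w n y"
    unfolding cost_def by (rule member_le_sum[where f="\<lambda>i. \<Sum>l\<in>{..<n}-{i}. w (y i) (y l)"]) (use ab in auto)
  finally show ?thesis .
qed

context LS
begin

definition EE where
  "EE = {\<omega> \<in> space (Om0 n). snd (snd \<omega>) < n \<and> fst \<omega> \<in> Dp \<and> fst (snd \<omega>) \<in> Gp \<and>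
     (\<forall>l\<in>{..<n}. r \<le> tdist (fst \<omega> j) (fst (snd \<omega>) l)) \<and>
     (\<forall>l\<in>{..<n}. l \<noteq> j \<longrightarrow> \<beta> / 2 \<le> tdist (zf n j (fst (snd \<omega>)) (snd (snd \<omega>)) j) (fst \<omega> l))}"

lemma EE_sets: "EE \<in> sets (Om0 n)"
proof -
  have [measurable]: "(\<lambda>\<omega>. fst \<omega>) \<in> measurable (Om0 n) (MIn n)"
    unfolding Om0_def by simp
  have [measurable]: "(\<lambda>\<omega>. fst (snd \<omega>)) \<in> measurable (Om0 n) (MIn n)"
    unfolding Om0_def by simp
  have [measurable]: "(\<lambda>\<omega>. snd (snd \<omega>)) \<in> measurable (Om0 n) (count_space UNIV)"
    unfolding Om0_def by simp
  have [measurable]: "(\<lambda>\<omega>. zf n j (fst (snd \<omega>)) (snd (snd \<omega>))) \<in> measurable (Om0 n) (MIn n)"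
    unfolding Om0_def
    using measurable_compose[OF measurable_snd meas_zf[OF jk(1)]] by (simp add: case_prod_beta')
  note comp_borel_all[measurable] Dp_sets[measurable] Gp_sets[measurable]
  show ?thesis unfolding EE_def by measurable
qed

lemma EE_sets': "EE \<in> sets (Om \<gamma> n)"
  using EE_sets sets_Om[OF jk(1) \<rho> \<gamma> EE_sets] by simp

lemma Mbound: "a \<in> Iint \<Longrightarrow> b \<in> Iint \<Longrightarrow> \<beta> / 2 \<le> tdist a b \<Longrightarrow> w a b \<le> M_w w (\<beta> / 2)"
  unfolding M_w_def by (rule SUP_upper2[where i="(a, b)"]) auto

lemma wsym: "a \<in> Iint \<Longrightarrow> b \<in> Iint \<Longrightarrow> w a b = w b a"
  using A by (simp add: assumptionA_def)

lemma pointwise: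
  assumes \<omega>: "\<omega> \<in> EE"
  shows "cost w n (Xp n j EE \<omega>) + cost w n (Yp n j EE \<omega>)
       < cost w n (fst \<omega>) + cost w n (zf n j (fst (snd \<omega>)) (snd (snd \<omega>)))"
proof -
  obtain x y m where om: "\<omega> = (x, y, m)" by (cases \<omega>) auto
  define z where "z = zf n j y m"
  have m: "m < n" and xD: "x \<in> Dp" and yG: "y \<in> Gp"
    and far: "\<And>l. l < n \<Longrightarrow> r \<le> tdist (x j) (y l)"
    and good: "\<And>l. l < n \<Longrightarrow> l \<noteq> j \<Longrightarrow> \<beta> / 2 \<le> tdist (z j) (x l)"
    using \<omega> by (auto simp: EE_def om z_def)
  have xs: "x \<in> space (MIn n)" using xD by (simp add: Dp_def)
  have ys: "y \<in> space (MIn n)" using yG by (simp add: Gp_def)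
  have zs: "z \<in> space (MIn n)" unfolding z_def by (rule zf_space[OF jk(1) ys])
  have xI: "\<And>l. l < n \<Longrightarrow> x l \<in> Iint" using xs by (auto simp: space_MIn)
  have zI: "\<And>l. l < n \<Longrightarrow> z l \<in> Iint" using zs by (auto simp: space_MIn)
  have bnd: "w (z j) (x l) \<le> M_w w (\<beta> / 2) \<and> w (x l) (z j) \<le> M_w w (\<beta> / 2) \<and>
      w (x j) (z l) \<le> M_w w (\<beta> / 2) \<and> w (z l) (x j) \<le> M_w w (\<beta> / 2)"
    if l: "l \<in> {..<n} - {j}" for l
  proof -
    have l': "l < n" "l \<noteq> j" using l by auto
    have g: "\<beta> / 2 \<le> tdist (z j) (x l)" by (rule good[OF l'])
    obtain i' where i': "i' < n" "z l = y i'" using zf_comp[OF jk(1) l'(1)] unfolding z_def by blast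
    have f: "\<beta> / 2 \<le> tdist (x j) (z l)" using far[OF i'(1)] i'(2) \<beta>r by simp
    show ?thesis
      using Mbound[OF zI[OF jk(1)] xI[OF l'(1)] g] Mbound[OF xI[OF l'(1)] zI[OF jk(1)]]
        Mbound[OF xI[OF jk(1)] zI[OF l'(1)] f] Mbound[OF zI[OF l'(1)] xI[OF jk(1)]] g f
      by (simp add: tdist_sym)
  qed
  have sym: "w (x k) (x j) = w (x j) (x k)" using wsym xI jk by auto
  have hk: "ennreal h < w (x j) (x k)" and cx: "cost w n x \<noteq> \<infinity>" using xD by (auto simp: Dp_def)
  have cz: "cost w n z \<noteq> \<infinity>" using yG cost_zf[OF jk(1)] by (simp add: Gp_def z_def)
  have "cost w n (x(j := z j)) + cost w n (z(j := x j)) < cost w n x + cost w n z"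
    by (rule swap_ineq[OF jk sym hk hM bnd cx cz])
  moreover have "Xp n j EE \<omega> = x(j := z j)" "Yp n j EE \<omega> = z(j := x j)"
    using \<omega> by (simp_all add: Xp_def Yp_def om z_def)
  ultimately show ?thesis by (simp add: om z_def)
qed

lemma pointwise_le:
  "cost w n (Xp n j EE \<omega>) + cost w n (Yp n j EE \<omega>)
       \<le> cost w n (fst \<omega>) + cost w n (zf n j (fst (snd \<omega>)) (snd (snd \<omega>)))"
proof (cases "\<omega> \<in> EE")
  case True then show ?thesis using pointwise less_imp_le by blast
next
  case False then show ?thesis by (cases \<omega>) (simp add: Xp_def Yp_def)
qed

end

context LS
begin

lemma sep:
  assumes y: "y \<in> Gp" and ab: "a < n" "b < n" "a \<noteq> b"
  shows "\<beta> < tdist (y a) (y b)"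
proof (rule ccontr)
  assume "\<not> \<beta> < tdist (y a) (y b)"
  then have le: "tdist (y a) (y b) \<le> \<beta>" by simp
  have ys: "y \<in> space (MIn n)" using y by (simp add: Gp_def)
  have I: "y a \<in> Iint" "y b \<in> Iint" using ys ab by (auto simp: space_MIn)
  have "m_w w \<beta> \<le> w (y a) (y b)"
    unfolding m_w_def by (rule INF_lower2[where i="(y a, y b)"]) (use I le in auto)
  also have "\<dots> \<le> cost w n y" by (rule term_le_cost[OF ab])
  also have "\<dots> < m_w w \<beta>" using y by (simp add: Gp_def)
  finally show False by simp
qed

lemma EE_pos: "emeasure (Om \<gamma> n) EE \<noteq> 0"
proof -
  interpret G: prob_space \<gamma> by (rule prob\<gamma>)
  interpret U: prob_space "Um n" by (rule prob_Um[OF jk(1) \<rho> \<gamma> EE_sets])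
  have sP: "sigma_finite_measure (\<gamma> \<Otimes>\<^sub>M Um n)"
    by (intro prob_space_imp_sigma_finite prob_space_pair prob\<gamma> prob_Um[OF jk(1) \<rho> \<gamma> EE_sets])
  show ?thesis
    unfolding Om_def
  proof (rule pos_slice[OF sP])
    show "EE \<in> sets (\<gamma> \<Otimes>\<^sub>M (\<gamma> \<Otimes>\<^sub>M Um n))" using EE_sets' by (simp add: Om_def)
    show "Dp \<in> sets \<gamma>" using Dp_sets sets\<gamma> by simp
    show "emeasure \<gamma> Dp \<noteq> 0" by (rule Dp_pos)
  next
    fix x assume xD: "x \<in> Dp"
    have xs: "x \<in> space (MIn n)" using xD by (simp add: Dp_def)
    show "emeasure (\<gamma> \<Otimes>\<^sub>M Um n) (Pair x -` EE) \<noteq> 0"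
    proof (rule pos_slice[OF U.sigma_finite_measure_axioms])
      show "Pair x -` EE \<in> sets (\<gamma> \<Otimes>\<^sub>M Um n)"
        using EE_sets' unfolding Om_def by (rule sets_Pair1)
      show "Gp \<inter> Far x \<in> sets \<gamma>" using Gp_sets Far_sets sets\<gamma> by simp
      show "emeasure \<gamma> (Gp \<inter> Far x) \<noteq> 0"
        using GF_pos[OF xs] by (simp add: G.emeasure_eq_measure)
    next
      fix y assume yGF: "y \<in> Gp \<inter> Far x"
      have ys: "y \<in> space (MIn n)" using yGF by (simp add: Gp_def)
      obtain m where m: "m < n" and mgood: "\<forall>l<n. l \<noteq> j \<longrightarrow> \<beta> / 2 \<le> tdist (y m) (x l)"
      proof -
        have yG: "y \<in> Gp" using yGF by simp
        show ?thesis using pigeon[where x=x and y=y and \<beta>=\<beta>, OF jk(1) sep[OF yG]] that by blast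
      qed
      have "(x, y, m) \<in> EE"
        using xD yGF m mgood xs ys zf_j[OF m, of j y]
        by (auto simp: EE_def Om0_def space_pair_measure Far_def)
      then have "{m} \<subseteq> Pair y -` Pair x -` EE" by auto
      then have "emeasure (Um n) {m} \<le> emeasure (Um n) (Pair y -` Pair x -` EE)"
        by (intro emeasure_mono) (auto simp: Um_def)
      moreover have "emeasure (Um n) {m} = ennreal (1 / real n)"
      proof -
        have "pmf (pmf_of_set {..<n}) m = 1 / real n" using m by (subst pmf_of_set) auto
        then show ?thesis by (simp add: Um_def emeasure_pmf_single)
      qed
      moreover have "0 < ennreal (1 / real n)" using m by simp
      ultimately show "emeasure (Um n) (Pair y -` Pair x -` EE) \<noteq> 0" by auto
    qed
  qed
qed

end

context LS
begin

lemma contradiction: False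
proof -
  let ?E = EE
  note Es = EE_sets
  let ?F = "F_OT w n \<rho>"
  let ?f = "\<lambda>\<omega>. cost w n (Xp n j EE \<omega>) + cost w n (Yp n j EE \<omega>)"
  let ?g = "\<lambda>\<omega>. cost w n (fst \<omega>) + cost w n (zf n j (fst (snd \<omega>)) (snd (snd \<omega>)))"
  have c: "cost w n \<in> borel_measurable (MIn n)" by (rule meas_cost[OF A])
  have mf: "?f \<in> borel_measurable (Om \<gamma> n)"
    using measurable_compose[OF meas_Xp'[OF jk(1) \<rho> \<gamma> Es] c] measurable_compose[OF meas_Yp'[OF jk(1) \<rho> \<gamma> Es] c]
    by measurable
  have mz: "(\<lambda>\<omega>. zf n j (fst (snd \<omega>)) (snd (snd \<omega>))) \<in> measurable (Om \<gamma> n) (MIn n)"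
    by (subst meas_Om[OF jk(1) \<rho> \<gamma> Es]) (rule meas_zf_Om[OF jk(1) \<rho> \<gamma> Es])
  have mfst: "(\<lambda>\<omega>. fst \<omega>) \<in> measurable (Om \<gamma> n) (MIn n)"
    by (subst meas_Om[OF jk(1) \<rho> \<gamma> Es]) (rule meas_fst_Om[OF jk(1) \<rho> \<gamma> Es])
  have msnd: "(\<lambda>\<omega>. fst (snd \<omega>)) \<in> measurable (Om \<gamma> n) (MIn n)"
    by (subst meas_Om[OF jk(1) \<rho> \<gamma> Es]) (simp add: Om0_def)
  have mg: "?g \<in> borel_measurable (Om \<gamma> n)"
    using measurable_compose[OF mfst c] measurable_compose[OF mz c] by measurable
  have g_int: "integral\<^sup>N (Om \<gamma> n) ?g = ?F + ?F"
  proof -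
    have "integral\<^sup>N (Om \<gamma> n) ?g = (\<integral>\<^sup>+\<omega>. cost w n (fst \<omega>) + cost w n (fst (snd \<omega>)) \<partial>Om \<gamma> n)"
      by (simp add: cost_zf[OF jk(1)])
    also have "\<dots> = (\<integral>\<^sup>+\<omega>. cost w n (fst \<omega>) \<partial>Om \<gamma> n) + (\<integral>\<^sup>+\<omega>. cost w n (fst (snd \<omega>)) \<partial>Om \<gamma> n)"
      using measurable_compose[OF mfst c] measurable_compose[OF msnd c] by (simp add: nn_integral_add)
    also have "\<dots> = ?F + ?F"
      using int_fst[OF jk(1) \<rho> \<gamma> Es c] int_snd[OF jk(1) \<rho> \<gamma> Es c] opt by simp
    finally show ?thesis .
  qed
  have fg: "integral\<^sup>N (Om \<gamma> n) ?f < integral\<^sup>N (Om \<gamma> n) ?g"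
  proof (rule nn_integral_less[OF mf mg])
    have "integral\<^sup>N (Om \<gamma> n) ?f \<le> integral\<^sup>N (Om \<gamma> n) ?g"
      by (intro nn_integral_mono pointwise_le)
    then show "integral\<^sup>N (Om \<gamma> n) ?f \<noteq> \<infinity>"
      using g_int Fin by (auto simp: top_unique)
    show "AE \<omega> in Om \<gamma> n. ?f \<omega> \<le> ?g \<omega>" by (intro AE_I2 pointwise_le)
    show "\<not> (AE \<omega> in Om \<gamma> n. ?g \<omega> \<le> ?f \<omega>)"
    proof
      assume "AE \<omega> in Om \<gamma> n. ?g \<omega> \<le> ?f \<omega>"
      then have "AE \<omega> in Om \<gamma> n. \<omega> \<notin> EE"
      proof (rule AE_mp)
        show "AE \<omega> in Om \<gamma> n. ?g \<omega> \<le> ?f \<omega> \<longrightarrow> \<omega> \<notin> EE"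
          using pointwise by (intro AE_I2) (meson leD)
      qed
      then have "emeasure (Om \<gamma> n) EE = 0"
        using EE_sets' by (subst (asm) AE_iff_measurable[of EE]) (auto dest: sets.sets_into_space)
      with EE_pos show False by simp
    qed
  qed
  have GamP: "Gam \<gamma> n j EE \<in> plans n \<rho>" by (rule Gam_plans[OF jk(1) \<rho> \<gamma> Es])
  have "?F \<le> integral\<^sup>N (Gam \<gamma> n j EE) (cost w n)"
    unfolding F_OT_def by (rule INF_lower[OF GamP])
  also have "\<dots> = integral\<^sup>N (Om \<gamma> n) ?f / 2"
    by (rule Gam_int[OF jk(1) \<rho> \<gamma> Es c])
  also have "\<dots> < ?F"
    using fg g_int by (simp add: divide_less_ennreal mult_2_right)
  finally show False by simp
qed

end

theorem lemma4p1:
  fixes w :: "real \<Rightarrow> real \<Rightarrow> ennreal" and n :: nat and \<rho> :: "real measure"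
    and \<gamma> :: "(nat \<Rightarrow> real) measure" and r \<beta> h :: real
  assumes "assumptionA w"
    and "probI \<rho>"
    and "r > 0"
    and "\<gamma> \<in> plans n \<rho>"
    and "(\<integral>\<^sup>+ x. cost w n x \<partial>\<gamma>) = F_OT w n \<rho>"
    and "kappa \<rho> r < 1 / real n"
    and "\<beta> > 0" and "h > 0"
    and "ennreal h > 2 * of_nat (n - 1) * M_w w (\<beta> / 2)"
    and "m_w w \<beta> > F_OT w n \<rho> / ennreal (1 - real n * kappa \<rho> r)"
    and "\<beta> / 2 \<le> r"
  shows "Dset w n h \<in> sets \<gamma> \<and> emeasure \<gamma> (Dset w n h) = 0"
proof -
  have sg: "sets \<gamma> = sets (MIn n)" using assms(4) by (simp add: plans_def)
  have Ds: "Dset w n h \<in> sets \<gamma>" using Dset_meas[OF assms(1)] sg by simp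
  have "emeasure \<gamma> (Dset w n h) = 0"
  proof (rule ccontr)
    assume D0: "emeasure \<gamma> (Dset w n h) \<noteq> 0"
    define Djk where "Djk j k = {x \<in> space (MIn n). ennreal h < w (x j) (x k)}" for j k
    have Djk_sets: "Djk j k \<in> sets \<gamma>" if "j < n" "k < n" for j k
      using meas_w_comp[OF assms(1) that] sg unfolding Djk_def by simp
    have "\<exists>j k. j < n \<and> k < n \<and> j \<noteq> k \<and> emeasure \<gamma> (Djk j k) \<noteq> 0"
    proof (rule ccontr)
      assume nt: "\<not> ?thesis"
      have null: "Djk (fst p) (snd p) \<in> null_sets \<gamma>" if pp: "p \<in> {p \<in> {..<n} \<times> {..<n}. fst p \<noteq> snd p}" for p
      proof -
        obtain a b where p: "p = (a, b)" "a < n" "b < n" "a \<noteq> b" using pp by (cases p) auto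
        then have "emeasure \<gamma> (Djk a b) = 0" using nt by blast
        then show ?thesis using p Djk_sets[of a b] by (simp add: null_sets_def)
      qed
      have "(\<Union>p\<in>{p \<in> {..<n} \<times> {..<n}. fst p \<noteq> snd p}. Djk (fst p) (snd p)) \<in> null_sets \<gamma>"
        by (rule null_sets_UN'[OF _ null]) (rule countable_finite, simp)
      moreover have "Dset w n h \<subseteq> (\<Union>p\<in>{p \<in> {..<n} \<times> {..<n}. fst p \<noteq> snd p}. Djk (fst p) (snd p))"
        unfolding Dset_def Djk_def by force
      ultimately have "emeasure \<gamma> (Dset w n h) \<le> 0"
        by (metis (no_types, lifting) emeasure_mono null_setsD1 null_setsD2)
      with D0 show False by auto
    qed
    then obtain j k where jk: "j < n" "k < n" "j \<noteq> k" "emeasure \<gamma> (Djk j k) \<noteq> 0" by blast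
    have "LS w n \<rho> \<gamma> r \<beta> h j k"
      unfolding LS_def using assms jk by (simp add: Djk_def)
    then show False by (rule LS.contradiction)
  qed
  with Ds show ?thesis by simp
qed

end
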